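(* Let $X$ be an absolutely continuous real random variable, symmetric and unimodal about $0$, with cdf $F$, and let $\beta\in(0,1]$. Define $U(t)=F(t+\lambda_t^\beta)-F(t)$ and $V(t)=F(t)-F(t-\lambda_t^\beta)$. Then for every $t\in\mathbb{R}$: (a) if $t\ge0$ then $U(t)\le\beta/2\le V(t)$; (b) if $t\le0$ then $V(t)\le\beta/2\le U(t)$.
   Context: $\lambda_t^\beta=\inf\{\lambda>0: F(t+\lambda)-F(t-\lambda)\ge\beta\}$. Symmetric and unimodal about $0$ means $X$ has a density $g$ with $g(-s)=g(s)$ which is nonincreasing on $[0,\infty)$. *)

theory Defs
  imports "HOL-Probability.Probability"
begin

definition cdf_ext :: "(real \<Rightarrow> real) \<Rightarrow> ereal \<Rightarrow> real" where
  "cdf_ext F x = (case x of ereal r \<Rightarrow> F r | PInfty \<Rightarrow> 1 | MInfty \<Rightarrow> 0)"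

text \<open>lambda_t^beta = inf {lambda > 0. F(t+lambda) - F(t-lambda) >= beta}, taken in the
  extended reals so that the infimum of the empty set is +infinity.\<close>
definition lam :: "(real \<Rightarrow> real) \<Rightarrow> real \<Rightarrow> real \<Rightarrow> ereal" where
  "lam F \<beta> t = (INF l \<in> {l::real. 0 < l \<and> F (t + l) - F (t - l) \<ge> \<beta>}. ereal l)"

definition Ufun :: "(real \<Rightarrow> real) \<Rightarrow> real \<Rightarrow> real \<Rightarrow> real" where
  "Ufun F \<beta> t = cdf_ext F (ereal t + lam F \<beta> t) - F t"

definition Vfun :: "(real \<Rightarrow> real) \<Rightarrow> real \<Rightarrow> real \<Rightarrow> real" where
  "Vfun F \<beta> t = F t - cdf_ext F (ereal t - lam F \<beta> t)"

end

theory Submission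
  imports Defs
begin

lemma refl_le:
  fixes g :: "real \<Rightarrow> real"
  assumes gm: "g \<in> borel_measurable borel"
    and AB: "\<And>y. (2*t - y \<in> B) = (y \<in> A)" and B: "B \<in> sets borel"
    and le: "\<And>y. y \<in> A \<Longrightarrow> g y \<le> g (2*t - y)"
  shows "(\<integral>\<^sup>+x. ennreal (g x) * indicator A x \<partial>lborel)
       \<le> (\<integral>\<^sup>+x. ennreal (g x) * indicator B x \<partial>lborel)"
proof -
  have m: "(\<lambda>x. ennreal (g x) * indicator B x) \<in> borel_measurable borel"
    using gm B by measurable
  have "(\<integral>\<^sup>+x. ennreal (g x) * indicator B x \<partial>lborel)
     = ennreal \<bar>-1\<bar> * (\<integral>\<^sup>+x. ennreal (g (2*t + -1 * x)) * indicator B (2*t + -1*x) \<partial>lborel)"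
    by (rule nn_integral_real_affine[OF m]) simp
  also have "\<dots> = (\<integral>\<^sup>+x. ennreal (g (2*t - x)) * indicator A x \<partial>lborel)"
    using AB by (simp add: indicator_def)
  also have "\<dots> \<ge> (\<integral>\<^sup>+x. ennreal (g x) * indicator A x \<partial>lborel)"
    by (rule nn_integral_mono) (auto simp: indicator_def le ennreal_leI)
  finally show ?thesis .
qed

context
  fixes N :: "real measure" and g :: "real \<Rightarrow> real"
  assumes rd: "real_distribution N"
    and dens: "N = density lborel (\<lambda>x. ennreal (g x))"
    and gm: "g \<in> borel_measurable borel"
    and gnn: "\<And>x. g x \<ge> 0"
    and gsym: "\<And>s. g (- s) = g s"
    and gmono: "antimono_on {0..} g"
begin

interpretation real_distribution N by (rule rd)

lemma g_abs: "\<bar>a\<bar> \<le> \<bar>b\<bar> \<Longrightarrow> g b \<le> g a"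
proof -
  assume h: "\<bar>a\<bar> \<le> \<bar>b\<bar>"
  have ga: "g a = g \<bar>a\<bar>" using gsym[of a] by (cases "a \<ge> 0") auto
  have gb: "g b = g \<bar>b\<bar>" using gsym[of b] by (cases "b \<ge> 0") auto
  have "g \<bar>b\<bar> \<le> g \<bar>a\<bar>" using gmono h by (auto simp: monotone_on_def)
  then show ?thesis using ga gb by simp
qed

lemma emN: "A \<in> sets borel \<Longrightarrow> emeasure N A = (\<integral>\<^sup>+x. ennreal (g x) * indicator A x \<partial>lborel)"
  using gm by (simp add: dens emeasure_density)

lemma null_pt: "{x} \<in> null_sets N"
proof -
  have "emeasure N {x} = 0"
    by (simp add: emN nn_integral_null_set)
  then show ?thesis by (auto simp: null_sets_def)
qed

lemma contF: "isCont (cdf N) x"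
  using null_pt[of x] isCont_cdf by (simp add: measure_def null_sets_def)

lemma closed_int: "a < b \<Longrightarrow> measure N {a..b} = cdf N b - cdf N a"
proof -
  assume ab: "a < b"
  have "{a..b} = {a<..b} \<union> {a}" using ab by auto
  then have "measure N {a..b} = measure N {a<..b}"
    using null_pt[of a] measure_Un_null_set[of "{a<..b}" N "{a}"] by simp
  then show ?thesis using cdf_diff_eq[OF ab] by simp
qed

lemma measle: "A \<in> sets borel \<Longrightarrow> B \<in> sets borel \<Longrightarrow> emeasure N A \<le> emeasure N B \<Longrightarrow> measure N A \<le> measure N B"
  by (simp add: emeasure_eq_measure)

lemma cmp_pos:
  assumes "t \<ge> 0" "l \<ge> 0"
  shows "cdf N (t+l) - cdf N t \<le> cdf N t - cdf N (t-l)"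
proof (cases "l = 0")
  case True then show ?thesis by simp
next
  case False
  then have l: "l > 0" using assms by simp
  have "cdf N (t+l) - cdf N t = measure N {t..t+l}" using closed_int[of t "t+l"] l by simp
  also have "\<dots> \<le> measure N {t-l..t}"
  proof (rule measle)
    show "emeasure N {t..t + l} \<le> emeasure N {t-l..t}"
      unfolding emN[OF borel_closed[OF closed_atLeastAtMost]] emN[of "{t-l..t}"]
    proof (rule refl_le[OF gm])
      fix y show "(2 * t - y \<in> {t - l..t}) = (y \<in> {t..t + l})" by auto
    next
      fix y assume "y \<in> {t..t+l}" then show "g y \<le> g (2*t - y)"
        using assms by (intro g_abs) auto
    qed simp
  qed auto
  also have "\<dots> = cdf N t - cdf N (t-l)" using closed_int[of "t-l" t] l by simp
  finally show ?thesis .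
qed

lemma cmp_neg:
  assumes "t \<le> 0" "l \<ge> 0"
  shows "cdf N t - cdf N (t-l) \<le> cdf N (t+l) - cdf N t"
proof (cases "l = 0")
  case True then show ?thesis by simp
next
  case False
  then have l: "l > 0" using assms by simp
  have "cdf N t - cdf N (t-l) = measure N {t-l..t}" using closed_int[of "t-l" t] l by simp
  also have "\<dots> \<le> measure N {t..t+l}"
  proof (rule measle)
    show "emeasure N {t-l..t} \<le> emeasure N {t..t+l}"
      unfolding emN[OF borel_closed[OF closed_atLeastAtMost]] emN[of "{t..t+l}"]
    proof (rule refl_le[OF gm])
      fix y show "(2 * t - y \<in> {t..t+l}) = (y \<in> {t-l..t})" by auto
    next
      fix y assume "y \<in> {t-l..t}" then show "g y \<le> g (2*t - y)"
        using assms by (intro g_abs) auto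
    qed simp
  qed auto
  also have "\<dots> = cdf N (t+l) - cdf N t" using closed_int[of t "t+l"] l by simp
  finally show ?thesis .
qed

lemma lim_plus: "((\<lambda>l. cdf N (t + l)) \<longlongrightarrow> 1) at_top"
proof -
  have "filterlim (\<lambda>l. t + l) at_top at_top"
    by (rule filterlim_tendsto_add_at_top[OF tendsto_const filterlim_ident])
  then show ?thesis using cdf_lim_at_top_prob by (rule filterlim_compose[rotated])
qed
lemma lim_minus: "((\<lambda>l. cdf N (t - l)) \<longlongrightarrow> 0) at_top"
proof -
  have "filterlim (\<lambda>l. t - l) at_bot at_top"
    using filterlim_tendsto_add_at_bot_iff[OF tendsto_const[of t], of "\<lambda>l. - l" at_top]
      filterlim_uminus_at_bot_at_top by simp
  then show ?thesis using cdf_lim_at_bot by (rule filterlim_compose[rotated])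
qed


lemma main_ctx:
  assumes b0: "0 < \<beta>" and b1: "\<beta> \<le> 1"
  shows "(t \<ge> 0 \<longrightarrow> Ufun (cdf N) \<beta> t \<le> \<beta> / 2 \<and> \<beta> / 2 \<le> Vfun (cdf N) \<beta> t)
       \<and> (t \<le> 0 \<longrightarrow> Vfun (cdf N) \<beta> t \<le> \<beta> / 2 \<and> \<beta> / 2 \<le> Ufun (cdf N) \<beta> t)"
proof -
  define F where "F = cdf N"
  define G where "G = (\<lambda>l. F (t + l) - F (t - l))"
  define S where "S = {l::real. 0 < l \<and> F (t + l) - F (t - l) \<ge> \<beta>}"
  have lamS: "lam F \<beta> t = (INF l\<in>S. ereal l)" by (simp add: lam_def S_def)
  have contG: "continuous_on UNIV G"
    unfolding G_def F_def
    by (intro continuous_on_diff continuous_on_compose2[OF continuous_at_imp_continuous_on, of UNIV "cdf N"])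
       (auto intro!: continuous_intros contF)
  have cmp: "(t \<ge> 0 \<longrightarrow> F (t+l) - F t \<le> F t - F (t-l)) \<and> (t \<le> 0 \<longrightarrow> F t - F (t-l) \<le> F (t+l) - F t)"
    if "l \<ge> 0" for l
    using cmp_pos[of t l] cmp_neg[of t l] that by (auto simp: F_def)
  show ?thesis
  proof (cases "S = {}")
    case True
    then have lam: "lam F \<beta> t = \<infinity>" by (simp add: lamS top_ereal_def)
    have U: "Ufun F \<beta> t = 1 - F t" by (simp add: Ufun_def lam cdf_ext_def)
    have V: "Vfun F \<beta> t = F t" by (simp add: Vfun_def lam cdf_ext_def)
    have limG: "(G \<longlongrightarrow> 1 - 0) at_top"
      unfolding G_def F_def by (intro tendsto_diff lim_plus lim_minus)
    have limU: "((\<lambda>l. F (t+l) - F t) \<longlongrightarrow> 1 - F t) at_top"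
      unfolding F_def by (intro tendsto_diff lim_plus tendsto_const)
    have limV: "((\<lambda>l. F t - F (t-l)) \<longlongrightarrow> F t - 0) at_top"
      unfolding F_def by (intro tendsto_diff lim_minus tendsto_const)
    have "1 - 0 \<le> \<beta>"
    proof (rule tendsto_le[OF _ tendsto_const limG])
      show "eventually (\<lambda>l. G l \<le> \<beta>) at_top"
        using True unfolding eventually_at_top_linorder S_def G_def
        by (intro exI[of _ 1]) (auto simp: not_le intro: less_imp_le)
    qed simp
    then have b: "\<beta> = 1" using b1 by simp
    have c1: "t \<ge> 0 \<Longrightarrow> 1 - F t \<le> F t - 0"
      by (rule tendsto_le[OF _ limV limU])
         (auto simp: eventually_at_top_linorder intro!: exI[of _ 0] dest: cmp)
    have c2: "t \<le> 0 \<Longrightarrow> F t - 0 \<le> 1 - F t"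
      by (rule tendsto_le[OF _ limU limV])
         (auto simp: eventually_at_top_linorder intro!: exI[of _ 0] dest: cmp)
    show ?thesis using c1 c2 b unfolding F_def[symmetric] U V by auto
  next
    case False
    have Gneg: "G l \<le> 0" if "l \<le> 0" for l
      unfolding G_def F_def using cdf_nondecreasing[of "t+l" "t-l"] that by simp
    have S': "S = {l. \<beta> \<le> G l}"
    proof (intro set_eqI iffI)
      fix l assume "l \<in> {l. \<beta> \<le> G l}"
      then have "\<beta> \<le> G l" by simp
      moreover have "\<not> l \<le> 0" using Gneg[of l] b0 calculation by linarith
      ultimately show "l \<in> S" unfolding S_def G_def by simp
    qed (simp add: S_def G_def)
    have closedS: "closed S" unfolding S'
      by (intro closed_Collect_le continuous_on_const contG)
    have bdd: "bdd_below S" unfolding S_def by (auto intro: bdd_belowI[of _ 0])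
    define L where "L = Inf S"
    have LS: "L \<in> S" unfolding L_def by (rule closed_contains_Inf[OF False bdd closedS])
    have lam: "lam F \<beta> t = ereal L"
      unfolding lamS L_def by (rule ereal_Inf'[OF bdd False, symmetric])
    have Lpos: "L > 0" and GL: "\<beta> \<le> G L" using LS unfolding S_def G_def by auto
    have G0: "G 0 = 0" by (simp add: G_def)
    obtain c where c: "0 \<le> c" "c \<le> L" "G c = \<beta>"
      using IVT'[of G 0 \<beta> L] G0 b0 GL Lpos continuous_on_subset[OF contG] by force
    have "c \<in> S" using c unfolding S' by simp
    then have "L \<le> c" unfolding L_def by (rule cInf_lower[OF _ bdd])
    then have GLb: "G L = \<beta>" using c by simp
    have U: "Ufun F \<beta> t = F (t + L) - F t" by (simp add: Ufun_def lam cdf_ext_def)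
    have V: "Vfun F \<beta> t = F t - F (t - L)" by (simp add: Vfun_def lam cdf_ext_def)
    show ?thesis using cmp[of L] Lpos GLb unfolding F_def[symmetric] U V G_def by auto
  qed
qed

end
theorem mainTheorem10:
  fixes M :: "'a measure" and X :: "'a \<Rightarrow> real" and g :: "real \<Rightarrow> real"
    and \<beta> t :: real
  assumes "prob_space M"
    and "distributed M lborel X (\<lambda>x. ennreal (g x))"
    and "\<And>x. g x \<ge> 0"
    and "\<And>s. g (- s) = g s"
    and "antimono_on {0..} g"
    and "0 < \<beta>" and "\<beta> \<le> 1"
  shows "(t \<ge> 0 \<longrightarrow>
            Ufun (cdf (distr M lborel X)) \<beta> t \<le> \<beta> / 2 \<and>
            \<beta> / 2 \<le> Vfun (cdf (distr M lborel X)) \<beta> t)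
       \<and> (t \<le> 0 \<longrightarrow>
            Vfun (cdf (distr M lborel X)) \<beta> t \<le> \<beta> / 2 \<and>
            \<beta> / 2 \<le> Ufun (cdf (distr M lborel X)) \<beta> t)"
  proof -
  let ?N = "distr M lborel X"
  interpret P: prob_space M by (rule assms(1))
  have Xm: "X \<in> measurable M lborel" using assms(2) by (rule distributed_measurable)
  have gm: "g \<in> borel_measurable borel"
    using distributed_real_measurable[OF _ assms(2)] assms(3) by simp
  have rd: "real_distribution ?N"
  proof -
    have "prob_space ?N" using Xm by (rule P.prob_space_distr)
    then show ?thesis by (simp add: real_distribution_def real_distribution_axioms_def)
  qed
  have dens: "?N = density lborel (\<lambda>x. ennreal (g x))"
    using assms(2) by (rule distributed_distr_eq_density)
  show ?thesis
    by (rule main_ctx[OF rd dens gm assms(3,4,5,6,7)])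
qed

end
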